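(* Let $n\in\mathbb{N}_0$, $k\in\mathbb{N}$, $x\in\mathbb{R}$ and $\lambda\in\mathbb{C}\setminus\{0\}$. Then $$E_{n}^{\ast(-k)}(x;\lambda)=\frac{k!\,2^{n-k}}{\lambda^{k}}\,y_{3}\!\left(n,k;\lambda^{2};\frac{x+k}{2k},\frac{x-k}{2k}\right).$$
   Context: For $k\in\mathbb{N}_0$ and $\lambda\ne0$, the second kind Apostol type Euler polynomials of order $-k$ are defined by $$\left(\frac{\lambda e^{t}+\lambda^{-1}e^{-t}}{2}\right)^{k}e^{tx}=\sum_{n=0}^{\infty}E_{n}^{\ast(-k)}(x;\lambda)\frac{t^{n}}{n!}.$$ For $a,b\in\mathbb{R}$, $\mu\in\mathbb{C}$, $k\in\mathbb{N}_0$, the numbers $y_3(n,k;\mu;a,b)$ are defined by $\frac{e^{bkt}}{k!}(\mu e^{(a-b)t}+1)^{k}=\sum_{n\ge0}y_{3}(n,k;\mu;a,b)\frac{t^{n}}{n!}$. *)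

theory Defs
  imports Complex_Main "HOL-Computational_Algebra.Formal_Power_Series"
begin

definition apostol_euler2_neg :: "nat \<Rightarrow> nat \<Rightarrow> real \<Rightarrow> complex \<Rightarrow> complex" where
  "apostol_euler2_neg n k x lam =
     fact n * fps_nth
       ((fps_const (1/2) * (fps_const lam * fps_exp 1 + fps_const (inverse lam) * fps_exp (-1))) ^ k
        * fps_exp (complex_of_real x)) n"

definition y3 :: "nat \<Rightarrow> nat \<Rightarrow> complex \<Rightarrow> real \<Rightarrow> real \<Rightarrow> complex" where
  "y3 n k \<mu> a b =
     fact n * fps_nth
       (fps_const (1 / fact k) * fps_exp (complex_of_real (b * real k))
        * (fps_const \<mu> * fps_exp (complex_of_real (a - b)) + 1) ^ k) n"

end

theory Submission
  imports Defs
begin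

lemma key:
  fixes k :: nat and x :: real and lam :: complex
  assumes "k \<ge> 1" and "lam \<noteq> 0"
  shows "fps_const (1 / fact k) * fps_exp (complex_of_real (((x - real k) / (2 * real k)) * real k))
        * (fps_const (lam^2) * fps_exp (complex_of_real ((x + real k) / (2 * real k) - (x - real k) / (2 * real k))) + 1) ^ k
     = fps_const (lam^k * 2^k / fact k) *
       (((fps_const (1/2) * (fps_const lam * fps_exp 1 + fps_const (inverse lam) * fps_exp (-1))) ^ k
        * fps_exp (complex_of_real x)) oo (fps_const (1/2) * fps_X))"
proof -
  define E where "E = (\<lambda>c::complex. fps_exp c)"
  have kpos: "real k \<noteq> 0" using assms by simp
  have b: "complex_of_real (((x - real k) / (2 * real k)) * real k) = of_real x / 2 - of_nat k / 2"
    using kpos by (simp add: field_simps)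
  have a: "complex_of_real ((x + real k) / (2 * real k) - (x - real k) / (2 * real k)) = 1"
    using kpos by (simp add: field_simps)
  have c0: "fps_nth (fps_const (1/2::complex) * fps_X) 0 = 0" by simp
  have comp: "(((fps_const (1/2) * (fps_const lam * fps_exp 1 + fps_const (inverse lam) * fps_exp (-1))) ^ k
        * fps_exp (complex_of_real x)) oo (fps_const (1/2) * fps_X))
     = (fps_const (1/2) * (fps_const lam * E (1/2) + fps_const (inverse lam) * E (-1/2))) ^ k * E (of_real x / 2)"
    by (simp add: fps_compose_mult_distrib[OF c0] fps_compose_power[OF c0, symmetric]
          fps_compose_add_distrib E_def)
  have EE: "E a * E b = E (a + b)" for a b by (simp add: E_def fps_exp_add_mult)
  have Ep: "E a ^ m = E (of_nat m * a)" for a m by (simp add: E_def fps_exp_power_mult)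
  have E0: "E 0 = 1" by (simp add: E_def)
  have inner: "fps_const (lam^2) * E 1 + 1 = fps_const lam * E (1/2) * (fps_const lam * E (1/2) + fps_const (inverse lam) * E (-1/2))"
  proof -
    have "fps_const lam * E (1/2) * (fps_const lam * E (1/2) + fps_const (inverse lam) * E (-1/2))
       = fps_const (lam * lam) * (E (1/2) * E (1/2)) + fps_const (lam * inverse lam) * (E (1/2) * E (-1/2))"
      by (simp add: algebra_simps flip: fps_const_mult)
    also have "\<dots> = fps_const (lam^2) * E 1 + 1"
      using assms(2) by (simp add: EE E0 power2_eq_square)
    finally show ?thesis by simp
  qed
  define P where "P = fps_const lam * E (1/2) + fps_const (inverse lam) * E (-1/2)"
  have p1: "(fps_const lam * E (1/2) * P) ^ k = fps_const (lam^k) * E (of_nat k / 2) * P ^ k"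
    by (simp add: power_mult_distrib Ep fps_const_power)
  have p2: "(fps_const (1/2) * P) ^ k = fps_const ((1/2)^k) * P ^ k"
    by (simp add: power_mult_distrib fps_const_power)
  have e2: "E (of_real x / 2 - of_nat k / 2) * E (of_nat k / 2) = E (of_real x / 2)"
    by (simp add: EE)
  have "fps_const (1 / fact k) * E (of_real x / 2 - of_nat k / 2) * (fps_const (lam^2) * E 1 + 1) ^ k
     = fps_const (lam^k * 2^k / fact k) * ((fps_const (1/2) * P) ^ k * E (of_real x / 2))"
  proof -
    have "fps_const (1 / fact k) * E (of_real x / 2 - of_nat k / 2) * (fps_const (lam^2) * E 1 + 1) ^ k
      = fps_const (1 / fact k) * E (of_real x / 2 - of_nat k / 2) * (fps_const (lam^k) * E (of_nat k / 2) * P ^ k)"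
      unfolding inner P_def[symmetric] p1 ..
    also have "\<dots> = fps_const (1 / fact k * lam^k) * (E (of_real x / 2 - of_nat k / 2) * E (of_nat k / 2)) * P ^ k"
      by (simp only: fps_const_mult[symmetric] mult_ac)
    also have "\<dots> = fps_const (1 / fact k * lam^k) * E (of_real x / 2) * P ^ k"
      by (simp only: e2)
    also have "\<dots> = fps_const (lam^k * 2^k / fact k * (1/2)^k) * (P ^ k * E (of_real x / 2))"
      by (simp add: power_one_over field_simps)
    also have "\<dots> = fps_const (lam^k * 2^k / fact k) * ((fps_const (1/2) * P) ^ k * E (of_real x / 2))"
      unfolding p2 by (simp only: fps_const_mult[symmetric] mult_ac)
    finally show ?thesis .
  qed
  then show ?thesis
    unfolding b a comp E_def P_def .
qed

theorem mainTheorem6: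
  fixes n k :: nat and x :: real and lam :: complex
  assumes "k \<ge> 1" and "lam \<noteq> 0"
  shows "apostol_euler2_neg n k x lam =
    fact k * (2::complex) powi (int n - int k) / lam ^ k *
      y3 n k (lam^2) ((x + real k) / (2 * real k)) ((x - real k) / (2 * real k))"
proof -
  define G where "G = (fps_const (1/2) * (fps_const lam * fps_exp 1 + fps_const (inverse lam) * fps_exp (-1))) ^ k
        * fps_exp (complex_of_real x)"
  have y: "y3 n k (lam^2) ((x + real k) / (2 * real k)) ((x - real k) / (2 * real k))
     = fact n * (lam^k * 2^k / fact k * ((1/2)^n * fps_nth G n))"
    unfolding y3_def key[OF assms] G_def[symmetric]
    by (simp add: fps_compose_linear)
  have pw: "(2::complex) powi (int n - int k) = 2^n / 2^k"
    by (simp add: power_int_diff)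
  show ?thesis
    unfolding apostol_euler2_neg_def G_def[symmetric] y pw
    using assms(2) by (simp add: field_simps power_one_over)
qed

end
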